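(* Let $I_n$ denote the number of inversion sequences of length $n$ avoiding all of the patterns $010,101,110,120,201,210$ (with $I_0=1$). Let $X=X(z)$ be the unique formal power series in $z$ satisfying $1-X-zX+2zX^2+z^2X-z^2X^3=0$. Then $$\sum_{n\ge0}I_nz^n=\frac{(X-1)(1-zX+z^2X)}{zX}=1+z+2z^2+5z^3+15z^4+50z^5+178z^6+663z^7+\cdots.$$
   Context: An inversion sequence of length $n$ is an integer sequence $(a_1,\dots,a_n)$ with $0\le a_i<i$ for all $i$. A pattern is a sequence $\sigma$ of non-negative integers containing every value from $0$ to $\max(\sigma)$; the reduction of a sequence replaces its smallest values by $0$, the next smallest by $1$, etc. A sequence $a$ contains $\sigma$ if some (not necessarily consecutive) subsequence of $a$ has reduction $\sigma$; otherwise $a$ avoids $\sigma$. Equivalently, these are the inversion sequences with no $i<j<k$ such that $a_j\ne a_k$ and $a_i\ge a_k$. *)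

theory Defs
  imports "HOL-Computational_Algebra.Formal_Power_Series"
begin

text \<open>Inversion sequences, 0-indexed: a list a of length n with a!i < i+1
  (i.e. a_i < i in 1-indexed notation).\<close>
definition inv_seq :: "nat list \<Rightarrow> bool" where
  "inv_seq a \<longleftrightarrow> (\<forall>i < length a. a ! i < i + 1)"

definition reduction :: "nat list \<Rightarrow> nat list" where
  "reduction xs = map (\<lambda>x. card {y \<in> set xs. y < x}) xs"

definition contains :: "nat list \<Rightarrow> nat list \<Rightarrow> bool" where
  "contains a \<sigma> \<longleftrightarrow> (\<exists>S. reduction (nths a S) = \<sigma>)"

definition avoids :: "nat list \<Rightarrow> nat list \<Rightarrow> bool" where
  "avoids a \<sigma> \<longleftrightarrow> \<not> contains a \<sigma>"

definition patterns6 :: "nat list set" where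
  "patterns6 = {[0,1,0], [1,0,1], [1,1,0], [1,2,0], [2,0,1], [2,1,0]}"

definition I :: "nat \<Rightarrow> nat" where
  "I n = card {a. length a = n \<and> inv_seq a \<and> (\<forall>\<sigma>\<in>patterns6. avoids a \<sigma>)}"

end

theory Submission
  imports Defs
begin

unbundle fps_syntax

lemma card3: "card {w \<in> {x,y,z::nat}. w < v} = (if x < v then 1 else 0) + (if y < v \<and> y \<noteq> x then 1 else 0) + (if z < v \<and> z \<noteq> x \<and> z \<noteq> y then 1 else 0)"
proof -
  have "{w \<in> {x,y,z::nat}. w < v} = (if x < v then {x} else {}) \<union> (if y < v then {y} else {}) \<union> (if z < v then {z} else {})" by auto
  then show ?thesis by (auto simp: card_insert_if)
qed
lemma red3: "reduction [x,y,z] \<in> patterns6 \<longleftrightarrow> (y \<noteq> z \<and> z \<le> (x::nat))"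
  unfolding reduction_def patterns6_def
  apply (simp only: list.set list.map card3 set_simps insert_commute)
  apply (cases "x < y"; cases "y < z"; cases "x < z"; cases "x = y"; cases "y = z"; cases "x = z")
  apply auto
  done

definition good :: "nat list \<Rightarrow> bool" where
  "good a \<longleftrightarrow> (\<forall>i j k. i < j \<longrightarrow> j < k \<longrightarrow> k < length a \<longrightarrow> a!j \<noteq> a!k \<longrightarrow> a!i < a!k)"

lemma nths_idx: "nths a S = map (nth a) (nths [0..<length a] S)"
proof -
  have "nths a S = nths (map (nth a) [0..<length a]) S" by (simp add: map_nth)
  also have "\<dots> = map (nth a) (nths [0..<length a] S)" by (rule nths_map)
  finally show ?thesis .
qed

lemma len3: "length xs = 3 \<Longrightarrow> \<exists>a b c. xs = [a,b,c]"
proof -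
  assume h: "length xs = 3"
  have "xs = [xs!0, xs!1, xs!2]"
    by (rule nth_equalityI) (use h in \<open>auto simp: less_Suc_eq numeral_3_eq_3 numeral_2_eq_2\<close>)
  then show ?thesis by blast
qed

lemma nths3:
  assumes "length (nths a S) = 3"
  shows "\<exists>i j k. i < j \<and> j < k \<and> k < length a \<and> nths a S = [a!i, a!j, a!k]"
proof -
  let ?l = "nths [0..<length a] S"
  have len: "length ?l = 3" using assms by (simp add: nths_idx[of a S])
  obtain i j k where l: "?l = [i,j,k]" using len3[OF len] by blast
  have "sorted ?l" by (rule sorted_nths) simp
  moreover have "distinct ?l" by (rule distinct_nthsI) simp
  moreover have "set ?l \<subseteq> {0..<length a}" using set_nths_subset[of "[0..<length a]" S] by simp
  ultimately have "sorted [i,j,k]" "distinct [i,j,k]" "set [i,j,k] \<subseteq> {0..<length a}" using l by simp_all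
  then have "i < j \<and> j < k \<and> k < length a" by auto
  moreover have "nths a S = [a!i, a!j, a!k]" by (simp only: nths_idx[of a S] l list.map)
  ultimately show ?thesis by blast
qed

lemma nths_three:
  assumes "i < j" "j < k" "k < length a"
  shows "nths a {i,j,k} = [a!i, a!j, a!k]"
proof -
  have "filter (\<lambda>x. x \<in> {i,j,k}) [0..<length a] = nths [0..<length a] {t. t < length a \<and> [0..<length a]!t \<in> {i,j,k}}"
    by (subst filter_eq_nths) simp
  also have "{t. t < length a \<and> [0..<length a]!t \<in> {i,j,k}} = {i,j,k}" using assms by auto
  finally have e: "nths [0..<length a] {i,j,k} = filter (\<lambda>x. x \<in> {i,j,k}) [0..<length a]" by simp
  have "filter (\<lambda>x. x \<in> {i,j,k}) [0..<length a] = [i,j,k]"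
    apply (rule sorted_distinct_set_unique)
    using assms by (auto intro: sorted_wrt_filter)
  then show ?thesis using e by (simp add: nths_idx[of a "{i,j,k}"])
qed

lemma avoid_good: "(\<forall>\<sigma>\<in>patterns6. avoids a \<sigma>) \<longleftrightarrow> good a"
proof
  assume A: "\<forall>\<sigma>\<in>patterns6. avoids a \<sigma>"
  show "good a" unfolding good_def
  proof (intro allI impI, rule ccontr)
    fix i j k assume h: "i < j" "j < k" "k < length a" "a!j \<noteq> a!k" "\<not> a!i < a!k"
    have "reduction (nths a {i,j,k}) \<in> patterns6"
      using h by (simp add: nths_three red3)
    then show False using A by (auto simp: avoids_def contains_def)
  qed
next
  assume G: "good a"
  show "\<forall>\<sigma>\<in>patterns6. avoids a \<sigma>"
  proof (rule ballI, unfold avoids_def contains_def, rule notI)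
    fix \<sigma> assume s: "\<sigma> \<in> patterns6" and "\<exists>S. reduction (nths a S) = \<sigma>"
    then obtain S where r: "reduction (nths a S) = \<sigma>" by blast
    have "length \<sigma> = 3" using s by (auto simp: patterns6_def)
    then have "length (nths a S) = 3" using r by (auto simp: reduction_def)
    then obtain i j k where h: "i < j" "j < k" "k < length a" "nths a S = [a!i, a!j, a!k]"
      using nths3 by blast
    have "reduction [a!i, a!j, a!k] \<in> patterns6" using r s h(4) by metis
    then have q: "a!j \<noteq> a!k \<and> a!k \<le> a!i" by (rule iffD1[OF red3])
    have "a!i < a!k" using G[unfolded good_def, rule_format, of i j k] h(1,2,3) q by blast
    then show False using q by simp
  qed
qed

definition valid :: "nat list \<Rightarrow> bool" where "valid a \<longleftrightarrow> inv_seq a \<and> good a"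
definition V :: "nat \<Rightarrow> nat list set" where "V n = {a. length a = n \<and> valid a}"
definition Mx :: "nat list \<Rightarrow> nat" where "Mx a = Max (set a)"
definition lo :: "nat list \<Rightarrow> nat" where
  "lo a = (if length a \<le> 1 then 0 else Suc (Max (set (butlast a))))"
definition gg :: "nat list \<Rightarrow> nat" where "gg a = length a - Mx a"
definition cc :: "nat list \<Rightarrow> nat" where "cc a = (if lo a \<le> last a then last a - lo a else 0)"
definition allowed :: "nat list \<Rightarrow> nat set" where
  "allowed a = {x. x \<le> length a \<and> (x = last a \<or> lo a \<le> x)}"

lemma inv_seq_snoc: "inv_seq (a @ [x]) \<longleftrightarrow> inv_seq a \<and> x \<le> length a"
  unfolding inv_seq_def
  by (auto simp: nth_append less_Suc_eq)

lemma good_snoc: "good (a @ [x]) \<longleftrightarrow> good a \<and> (\<forall>i j. i < j \<longrightarrow> j < length a \<longrightarrow> a!j \<noteq> x \<longrightarrow> a!i < x)"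
proof
  assume g: "good (a @ [x])"
  have "good a" unfolding good_def
  proof (intro allI impI)
    fix i j k assume h: "i < j" "j < k" "k < length a" "a!j \<noteq> a!k"
    then show "a!i < a!k" using g[unfolded good_def, rule_format, of i j k] by (simp add: nth_append)
  qed
  moreover have "\<forall>i j. i < j \<longrightarrow> j < length a \<longrightarrow> a!j \<noteq> x \<longrightarrow> a!i < x"
  proof (intro allI impI)
    fix i j assume h: "i < j" "j < length a" "a!j \<noteq> x"
    then show "a!i < x" using g[unfolded good_def, rule_format, of i j "length a"] by (simp add: nth_append)
  qed
  ultimately show "good a \<and> (\<forall>i j. i < j \<longrightarrow> j < length a \<longrightarrow> a!j \<noteq> x \<longrightarrow> a!i < x)" by blast
next
  assume h: "good a \<and> (\<forall>i j. i < j \<longrightarrow> j < length a \<longrightarrow> a!j \<noteq> x \<longrightarrow> a!i < x)"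
  show "good (a @ [x])" unfolding good_def
  proof (intro allI impI)
    fix i j k assume hh: "i < j" "j < k" "k < length (a @ [x])" "(a @ [x])!j \<noteq> (a @ [x])!k"
    show "(a @ [x])!i < (a @ [x])!k"
    proof (cases "k = length a")
      case True then show ?thesis using hh h by (simp add: nth_append)
    next
      case False then have "k < length a" using hh by simp
      then show ?thesis using hh h unfolding good_def by (simp add: nth_append)
    qed
  qed
qed

lemma good_last_cond:
  assumes "good a" "a \<noteq> []"
  shows "(\<forall>i j. i < j \<longrightarrow> j < length a \<longrightarrow> a!j \<noteq> x \<longrightarrow> a!i < x) \<longleftrightarrow>
         (x = last a \<or> (\<forall>i < length a - 1. a!i < x))"
proof -
  define m where "m = length a - 1"
  have m: "m < length a" "last a = a ! m" using assms(2) by (auto simp: m_def last_conv_nth)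
  show ?thesis
  proof
    assume h: "\<forall>i j. i < j \<longrightarrow> j < length a \<longrightarrow> a!j \<noteq> x \<longrightarrow> a!i < x"
    show "x = last a \<or> (\<forall>i < length a - 1. a!i < x)"
    proof (cases "x = last a")
      case False
      then have "a ! m \<noteq> x" using m by simp
      then have "\<forall>i < m. a!i < x" using h m(1) by blast
      then show ?thesis by (simp add: m_def)
    qed simp
  next
    assume h: "x = last a \<or> (\<forall>i < length a - 1. a!i < x)"
    show "\<forall>i j. i < j \<longrightarrow> j < length a \<longrightarrow> a!j \<noteq> x \<longrightarrow> a!i < x"
    proof (intro allI impI)
      fix i j assume hh: "i < j" "j < length a" "a!j \<noteq> x"
      show "a!i < x"
      proof (cases "x = last a")
        case True
        then have xm: "x = a ! m" using m by simp
        then have "j \<noteq> m" using hh(3) by auto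
        then have "j < m" using hh(2) by (simp add: m_def)
        then have "a!i < a!m" using assms(1)[unfolded good_def, rule_format, of i j m] hh xm m(1) by blast
        then show ?thesis using xm by simp
      next
        case False then have "\<forall>i < length a - 1. a!i < x" using h by simp
        moreover have "i < length a - 1" using hh by simp
        ultimately show ?thesis by simp
      qed
    qed
  qed
qed

lemma lo_cond:
  assumes "a \<noteq> []"
  shows "(\<forall>i < length a - 1. a!i < x) \<longleftrightarrow> lo a \<le> x"
proof (cases "length a \<le> 1")
  case True then show ?thesis by (simp add: lo_def)
next
  case False
  then have ne: "butlast a \<noteq> []" by (cases a rule: rev_cases) auto
  have "(\<forall>i < length a - 1. a!i < x) \<longleftrightarrow> (\<forall>y\<in>set (butlast a). y < x)"
  proof
    assume h: "\<forall>i < length a - 1. a!i < x"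
    show "\<forall>y\<in>set (butlast a). y < x"
    proof
      fix y assume "y \<in> set (butlast a)"
      then obtain i where "i < length (butlast a)" "y = butlast a ! i" by (auto simp: in_set_conv_nth)
      then show "y < x" using h by (simp add: nth_butlast)
    qed
  next
    assume h: "\<forall>y\<in>set (butlast a). y < x"
    show "\<forall>i < length a - 1. a!i < x"
    proof (intro allI impI)
      fix i assume i: "i < length a - 1"
      then have "butlast a ! i \<in> set (butlast a)" by simp
      then show "a!i < x" using h i by (simp add: nth_butlast)
    qed
  qed
  also have "\<dots> \<longleftrightarrow> Max (set (butlast a)) < x" using ne by simp
  finally show ?thesis using False by (simp add: lo_def Suc_le_eq)
qed

lemma valid_snoc:
  assumes "valid a" "a \<noteq> []"
  shows "valid (a @ [x]) \<longleftrightarrow> x \<in> allowed a"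
  using assms good_last_cond[of a x] lo_cond[of a x]
  by (auto simp: valid_def inv_seq_snoc good_snoc allowed_def)

lemma valid_butlast: "valid (a @ [x]) \<Longrightarrow> valid a"
  by (simp add: valid_def inv_seq_snoc good_snoc)

lemma finite_V: "finite (V n)"
proof -
  have "V n \<subseteq> {a. set a \<subseteq> {0..n} \<and> length a = n}"
  proof
    fix a assume a: "a \<in> V n"
    have "\<forall>y\<in>set a. y \<le> n"
    proof
      fix y assume "y \<in> set a"
      then obtain i where i: "i < length a" "y = a ! i" by (auto simp: in_set_conv_nth)
      have "a ! i < i + 1" using a i(1) by (simp add: V_def valid_def inv_seq_def)
      then show "y \<le> n" using i a by (simp add: V_def)
    qed
    then show "a \<in> {a. set a \<subseteq> {0..n} \<and> length a = n}" using a by (auto simp: V_def)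
  qed
  moreover have "finite {a. set a \<subseteq> {0..n} \<and> length a = n}"
    by (rule finite_lists_length_eq) simp
  ultimately show ?thesis by (rule finite_subset)
qed

lemma finite_allowed: "finite (allowed a)"
  by (rule finite_subset[of _ "{..length a}"]) (auto simp: allowed_def)

lemma V_Suc:
  assumes "n \<ge> 1"
  shows "V (Suc n) = (\<lambda>(a,x). a @ [x]) ` (SIGMA a:V n. allowed a)"
proof
  show "V (Suc n) \<subseteq> (\<lambda>(a,x). a @ [x]) ` (SIGMA a:V n. allowed a)"
  proof
    fix b assume b: "b \<in> V (Suc n)"
    then have "b \<noteq> []" by (auto simp: V_def)
    then obtain a x where bx: "b = a @ [x]" by (cases b rule: rev_cases) auto
    then have "valid a" "length a = n" using b valid_butlast by (auto simp: V_def)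
    moreover have "a \<noteq> []" using \<open>length a = n\<close> assms by auto
    ultimately have "x \<in> allowed a" using b bx valid_snoc by (auto simp: V_def)
    then show "b \<in> (\<lambda>(a,x). a @ [x]) ` (SIGMA a:V n. allowed a)"
      using bx \<open>valid a\<close> \<open>length a = n\<close> by (auto simp: V_def)
  qed
next
  show "(\<lambda>(a,x). a @ [x]) ` (SIGMA a:V n. allowed a) \<subseteq> V (Suc n)"
  proof
    fix b assume "b \<in> (\<lambda>(a,x). a @ [x]) ` (SIGMA a:V n. allowed a)"
    then obtain a x where "a \<in> V n" "x \<in> allowed a" "b = a @ [x]" by auto
    moreover have "a \<noteq> []" using \<open>a \<in> V n\<close> assms by (auto simp: V_def)
    ultimately show "b \<in> V (Suc n)" using valid_snoc by (auto simp: V_def)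
  qed
qed

lemma sum_V_Suc:
  assumes "n \<ge> 1"
  shows "(\<Sum>b\<in>V (Suc n). f b) = (\<Sum>a\<in>V n. \<Sum>x\<in>allowed a. f (a @ [x]))"
proof -
  have inj: "inj_on (\<lambda>(a,x). a @ [x]) (SIGMA a:V n. allowed a)"
    by (auto simp: inj_on_def)
  have "(\<Sum>b\<in>V (Suc n). f b) = (\<Sum>p\<in>(SIGMA a:V n. allowed a). f ((\<lambda>(a,x). a @ [x]) p))"
    unfolding V_Suc[OF assms] by (rule sum.reindex[OF inj, unfolded comp_def])
  also have "\<dots> = (\<Sum>a\<in>V n. \<Sum>x\<in>allowed a. f (a @ [x]))"
  proof -
    have e1: "(\<Sum>a\<in>V n. \<Sum>x\<in>allowed a. f (a @ [x])) = (\<Sum>(a,x)\<in>Sigma (V n) allowed. f (a @ [x]))"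
      by (rule sum.Sigma) (auto simp: finite_V finite_allowed)
    have e2: "(\<Sum>(a,x)\<in>Sigma (V n) allowed. f (a @ [x])) = (\<Sum>p\<in>(SIGMA a:V n. allowed a). f ((\<lambda>(a,x). a @ [x]) p))"
      by (rule sum.cong) auto
    show ?thesis using e1 e2 by simp
  qed
  finally show ?thesis .
qed

lemma valid_facts:
  assumes "valid a" "a \<noteq> []"
  shows "Mx a < length a" "last a \<le> Mx a" "Mx a \<in> set a"
proof -
  have "\<forall>y\<in>set a. y < length a"
  proof
    fix y assume "y \<in> set a"
    then obtain i where i: "i < length a" "y = a ! i" by (auto simp: in_set_conv_nth)
    have "a ! i < i + 1" using assms(1) i(1) by (simp add: valid_def inv_seq_def)
    then show "y < length a" using i by simp
  qed
  then show "Mx a < length a" using assms by (simp add: Mx_def)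
  show "last a \<le> Mx a" using assms by (simp add: Mx_def)
  show "Mx a \<in> set a" using assms by (simp add: Mx_def)
qed

lemma snoc_state:
  assumes "a \<noteq> []"
  shows "Mx (a @ [x]) = max x (Mx a)" "lo (a @ [x]) = Suc (Mx a)"
    "gg (a @ [x]) = Suc (length a) - max x (Mx a)"
    "cc (a @ [x]) = (if Suc (Mx a) \<le> x then x - Suc (Mx a) else 0)"
proof -
  show 1: "Mx (a @ [x]) = max x (Mx a)" using assms by (simp add: Mx_def)
  have "length (a @ [x]) > 1" using assms by (cases a) auto
  then show 2: "lo (a @ [x]) = Suc (Mx a)" by (simp add: lo_def Mx_def)
  show "gg (a @ [x]) = Suc (length a) - max x (Mx a)" using 1 by (simp add: gg_def)
  show "cc (a @ [x]) = (if Suc (Mx a) \<le> x then x - Suc (Mx a) else 0)" using 2 by (simp add: cc_def)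
qed

lemma lo_cases:
  assumes "valid a" "a \<noteq> []"
  shows "(lo a \<le> last a \<and> Mx a = last a) \<or> (last a < lo a \<and> Mx a = lo a - 1)"
proof (cases "length a \<le> 1")
  case True
  then obtain y where "a = [y]" using assms(2) by (cases a) auto
  then show ?thesis by (simp add: lo_def Mx_def)
next
  case False
  then have ne: "butlast a \<noteq> []" by (cases a rule: rev_cases) auto
  have sa: "set a = insert (last a) (set (butlast a))"
    using assms(2) by (metis append_butlast_last_id list.set(2) rotate1.simps(2) set_rotate1)
  have M: "Mx a = max (last a) (Max (set (butlast a)))"
    unfolding Mx_def sa using ne by simp
  have lo: "lo a = Suc (Max (set (butlast a)))" using False by (simp add: lo_def)
  show ?thesis using M lo by auto
qed

lemma local_sum:
  fixes \<phi> :: "nat \<Rightarrow> nat \<Rightarrow> nat"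
  assumes "valid a" "a \<noteq> []"
  shows "(\<Sum>x\<in>allowed a. \<phi> (gg (a@[x])) (cc (a@[x]))) =
         (1 + cc a) * \<phi> (gg a + 1) 0 + (\<Sum>t=1..gg a. \<phi> (gg a + 1 - t) (t - 1))"
proof -
  define L M l where "L = length a" "M = Mx a" "l = last a"
  have f: "M < L" "l \<le> M" using valid_facts[OF assms] by (auto simp: L_M_l_def)
  have lc: "(lo a \<le> l \<and> M = l) \<or> (l < lo a \<and> M = lo a - 1)" using lo_cases[OF assms] by (simp add: L_M_l_def)
  define A1 where "A1 = insert l {lo a..M}"
  define A2 where "A2 = {Suc M..L}"
  have al: "allowed a = A1 \<union> A2" using f lc
    by (auto simp: allowed_def A1_def A2_def L_M_l_def)
  have dis: "A1 \<inter> A2 = {}" using f by (auto simp: A1_def A2_def)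
  have cA1: "card A1 = 1 + cc a"
  proof (cases "lo a \<le> l")
    case True
    then have "M = l" using lc by auto
    then have "A1 = {lo a..l}" using True by (auto simp: A1_def)
    then show ?thesis using True by (simp add: cc_def L_M_l_def)
  next
    case False
    then have "M = lo a - 1" using lc by auto
    then have "A1 = {l}" using False by (auto simp: A1_def)
    then show ?thesis using False by (simp add: cc_def L_M_l_def)
  qed
  have s1: "(\<Sum>x\<in>A1. \<phi> (gg (a@[x])) (cc (a@[x]))) = (1 + cc a) * \<phi> (gg a + 1) 0"
  proof -
    have "\<And>x. x \<in> A1 \<Longrightarrow> \<phi> (gg (a@[x])) (cc (a@[x])) = \<phi> (gg a + 1) 0"
    proof -
      fix x assume "x \<in> A1"
      then have "x \<le> M" using f by (auto simp: A1_def)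
      then show "\<phi> (gg (a@[x])) (cc (a@[x])) = \<phi> (gg a + 1) 0"
        using snoc_state[OF assms(2), of x] f by (simp add: gg_def L_M_l_def max_def Suc_diff_le less_imp_le)
    qed
    then show ?thesis using cA1 by simp
  qed
  have s2: "(\<Sum>x\<in>A2. \<phi> (gg (a@[x])) (cc (a@[x]))) = (\<Sum>t=1..gg a. \<phi> (gg a + 1 - t) (t - 1))"
  proof -
    have "(\<Sum>x\<in>A2. \<phi> (gg (a@[x])) (cc (a@[x]))) = (\<Sum>x\<in>A2. \<phi> (Suc L - x) (x - Suc M))"
      using snoc_state[OF assms(2)] by (intro sum.cong) (auto simp: A2_def L_M_l_def max_def)
    also have "\<dots> = (\<Sum>t=1..L - M. \<phi> (Suc L - (t + M)) (t + M - Suc M))"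
    proof -
      have img: "(\<lambda>t. t + M) ` {1..L - M} = A2" using f unfolding A2_def
        by (auto simp: image_iff intro!: bexI[where x="_ - M"])
      have inj: "inj_on (\<lambda>t. t + M) {1..L - M}" by (auto simp: inj_on_def)
      show ?thesis by (simp only: img[symmetric] sum.reindex[OF inj] comp_def)
    qed
    also have "\<dots> = (\<Sum>t=1..gg a. \<phi> (gg a + 1 - t) (t - 1))"
      using f by (intro sum.cong) (auto simp: gg_def L_M_l_def add.commute)
    finally show ?thesis .
  qed
  have "(\<Sum>x\<in>allowed a. \<phi> (gg (a@[x])) (cc (a@[x]))) =
      (\<Sum>x\<in>A1. \<phi> (gg (a@[x])) (cc (a@[x]))) + (\<Sum>x\<in>A2. \<phi> (gg (a@[x])) (cc (a@[x])))"
    unfolding al by (rule sum.union_disjoint) (use f in \<open>auto simp: A1_def A2_def\<close>)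
  then show ?thesis using s1 s2 by simp
qed

definition Snum :: "nat \<Rightarrow> nat \<Rightarrow> nat" where
  "Snum n k = (\<Sum>a\<in>V n. if gg a = k then 1 else 0)"
definition Tnum :: "nat \<Rightarrow> nat \<Rightarrow> nat" where
  "Tnum n k = (\<Sum>a\<in>V n. if gg a = k then cc a else 0)"

lemma V_gg:
  assumes "a \<in> V n" "n \<ge> 1"
  shows "1 \<le> gg a" "gg a \<le> n"
proof -
  have v: "valid a" "length a = n" "a \<noteq> []" using assms by (auto simp: V_def)
  show "1 \<le> gg a" using valid_facts(1)[OF v(1) v(3)] by (simp add: gg_def)
  show "gg a \<le> n" using v by (simp add: gg_def)
qed

lemma ind_sum:
  fixes f :: "nat \<Rightarrow> nat"
  assumes "1 \<le> k"
  shows "(\<Sum>t=1..g. if g + 1 - t = k then f t else 0) = (if k \<le> g then f (g + 1 - k) else 0)"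
proof -
  have "(\<Sum>t=1..g. if g + 1 - t = k then f t else 0) = (\<Sum>t\<in>{1..g}. if t = g + 1 - k then f t else 0)"
    using assms by (intro sum.cong) auto
  also have "\<dots> = (if g + 1 - k \<in> {1..g} then f (g + 1 - k) else 0)" by (rule sum.delta) simp
  also have "\<dots> = (if k \<le> g then f (g + 1 - k) else 0)" using assms by auto
  finally show ?thesis .
qed

lemma ind_sum2:
  fixes h :: "nat \<Rightarrow> nat"
  assumes "g \<le> n"
  shows "(if k \<le> g then h (g - k) else 0) = (\<Sum>i\<le>n. if g = k + i then h i else 0)"
proof -
  have "(\<Sum>i\<le>n. if g = k + i then h i else 0) = (\<Sum>i\<in>{..n}. if i = g - k then (if k \<le> g then h i else 0) else 0)"
    by (intro sum.cong) auto
  also have "\<dots> = (if g - k \<in> {..n} then (if k \<le> g then h (g - k) else 0) else 0)" by (rule sum.delta) simp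
  also have "\<dots> = (if k \<le> g then h (g - k) else 0)" using assms by auto
  finally show ?thesis by simp
qed

lemma step_sum:
  fixes \<phi> :: "nat \<Rightarrow> nat \<Rightarrow> nat"
  assumes "n \<ge> 1"
  shows "(\<Sum>b\<in>V (Suc n). \<phi> (gg b) (cc b)) =
    (\<Sum>a\<in>V n. (1 + cc a) * \<phi> (gg a + 1) 0 + (\<Sum>t=1..gg a. \<phi> (gg a + 1 - t) (t - 1)))"
proof -
  have "(\<Sum>b\<in>V (Suc n). \<phi> (gg b) (cc b)) = (\<Sum>a\<in>V n. \<Sum>x\<in>allowed a. \<phi> (gg (a@[x])) (cc (a@[x])))"
    by (rule sum_V_Suc[OF assms])
  also have "\<dots> = (\<Sum>a\<in>V n. (1 + cc a) * \<phi> (gg a + 1) 0 + (\<Sum>t=1..gg a. \<phi> (gg a + 1 - t) (t - 1)))"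
  proof (rule sum.cong[OF refl])
    fix a assume "a \<in> V n"
    then have "valid a" "a \<noteq> []" using assms by (auto simp: V_def)
    then show "(\<Sum>x\<in>allowed a. \<phi> (gg (a@[x])) (cc (a@[x]))) = (1 + cc a) * \<phi> (gg a + 1) 0 + (\<Sum>t=1..gg a. \<phi> (gg a + 1 - t) (t - 1))"
      by (rule local_sum)
  qed
  finally show ?thesis .
qed

lemma Snum_Suc:
  assumes "n \<ge> 1" "k \<ge> 1"
  shows "Snum (Suc n) k = Snum n (k - 1) + Tnum n (k - 1) + (\<Sum>i\<le>n. Snum n (k + i))"
proof -
  have "Snum (Suc n) k = (\<Sum>a\<in>V n. (1 + cc a) * (if gg a + 1 = k then 1 else 0) +
      (\<Sum>t=1..gg a. if gg a + 1 - t = k then 1 else 0))"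
    unfolding Snum_def using step_sum[OF assms(1), of "\<lambda>g c. if g = k then 1 else 0"] by simp
  also have "\<dots> = (\<Sum>a\<in>V n. (if gg a = k - 1 then 1 else 0) + (if gg a = k - 1 then cc a else 0) +
      (\<Sum>i\<le>n. if gg a = k + i then 1 else 0))"
  proof (rule sum.cong[OF refl])
    fix a assume a: "a \<in> V n"
    have "(\<Sum>t=1..gg a. if gg a + 1 - t = k then 1 else 0) = (if k \<le> gg a then 1 else (0::nat))"
      using ind_sum[OF assms(2), of "gg a" "\<lambda>_. 1"] by simp
    also have "\<dots> = (\<Sum>i\<le>n. if gg a = k + i then 1 else 0)"
      using ind_sum2[OF V_gg(2)[OF a assms(1)], of k "\<lambda>_. 1"] by simp
    finally show "(1 + cc a) * (if gg a + 1 = k then 1 else 0) + (\<Sum>t=1..gg a. if gg a + 1 - t = k then 1 else 0) =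
      (if gg a = k - 1 then 1 else 0) + (if gg a = k - 1 then cc a else 0) + (\<Sum>i\<le>n. if gg a = k + i then 1 else 0)"
      using assms(2) by auto
  qed
  also have "\<dots> = Snum n (k - 1) + Tnum n (k - 1) + (\<Sum>i\<le>n. Snum n (k + i))"
    unfolding Snum_def Tnum_def sum.distrib by (simp add: sum.swap[of _ "V n"])
  finally show ?thesis .
qed

lemma Tnum_Suc:
  assumes "n \<ge> 1" "k \<ge> 1"
  shows "Tnum (Suc n) k = (\<Sum>i\<le>n. i * Snum n (k + i))"
proof -
  have "Tnum (Suc n) k = (\<Sum>a\<in>V n. (1 + cc a) * (if gg a + 1 = k then 0 else 0) +
      (\<Sum>t=1..gg a. if gg a + 1 - t = k then t - 1 else 0))"
    unfolding Tnum_def using step_sum[OF assms(1), of "\<lambda>g c. if g = k then c else 0"] by simp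
  also have "\<dots> = (\<Sum>a\<in>V n. (\<Sum>i\<le>n. if gg a = k + i then i else 0))"
  proof (rule sum.cong[OF refl])
    fix a assume a: "a \<in> V n"
    have "(\<Sum>t=1..gg a. if gg a + 1 - t = k then t - 1 else 0) = (if k \<le> gg a then gg a + 1 - k - 1 else (0::nat))"
      using ind_sum[OF assms(2), of "gg a" "\<lambda>t. t - 1"] by simp
    also have "\<dots> = (if k \<le> gg a then gg a - k else (0::nat))" by simp
    also have "\<dots> = (\<Sum>i\<le>n. if gg a = k + i then i else 0)"
      using ind_sum2[OF V_gg(2)[OF a assms(1)], of k "\<lambda>i. i"] by simp
    finally show "(1 + cc a) * (if gg a + 1 = k then 0 else 0) + (\<Sum>t=1..gg a. if gg a + 1 - t = k then t - 1 else 0) =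
      (\<Sum>i\<le>n. if gg a = k + i then i else 0)" by simp
  qed
  also have "\<dots> = (\<Sum>i\<le>n. i * Snum n (k + i))"
    unfolding Snum_def by (subst sum.swap) (simp add: sum_distrib_left if_distrib cong: if_cong)
  finally show ?thesis .
qed

lemma Snum_0: "n \<ge> 1 \<Longrightarrow> Snum n 0 = 0"
  unfolding Snum_def using V_gg(1) by (intro sum.neutral) fastforce

lemma Tnum_0: "n \<ge> 1 \<Longrightarrow> Tnum n 0 = 0"
  unfolding Tnum_def using V_gg(1) by (intro sum.neutral) fastforce

lemma V_1: "V 1 = {[0]}"
proof -
  have "\<And>a. length a = 1 \<Longrightarrow> valid a \<longleftrightarrow> a = [0]"
  proof -
    fix a :: "nat list" assume "length a = 1"
    then obtain y where "a = [y]" by (cases a) auto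
    then show "valid a \<longleftrightarrow> a = [0]" by (auto simp: valid_def inv_seq_def good_def)
  qed
  then show ?thesis by (auto simp: V_def)
qed

lemma V_1': "V (Suc 0) = {[0]}" using V_1 by simp

lemma state_0: "gg [0] = 1" "cc [0] = 0"
  by (simp_all add: gg_def cc_def Mx_def lo_def)

lemma Snum_1: "Snum 1 k = (if k = 1 then 1 else 0)"
  by (simp add: Snum_def V_1 V_1' state_0)

lemma Tnum_1: "Tnum 1 k = 0"
  by (simp add: Tnum_def V_1 V_1' state_0)

lemma card_V: "n \<ge> 1 \<Longrightarrow> card (V n) = (\<Sum>i\<le>n. Snum n (1 + i))"
proof -
  assume n: "n \<ge> 1"
  have "card (V n) = (\<Sum>a\<in>V n. 1)" by simp
  also have "\<dots> = (\<Sum>a\<in>V n. \<Sum>i\<le>n. if gg a = 1 + i then 1 else 0)"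
  proof (rule sum.cong[OF refl])
    fix a assume a: "a \<in> V n"
    have e: "(if 1 \<le> gg a then (1::nat) else 0) = (\<Sum>i\<le>n. if gg a = 1 + i then 1 else 0)"
      by (rule ind_sum2[OF V_gg(2)[OF a n], of 1 "\<lambda>_. 1"])
    have e1: "(if 1 \<le> gg a then (1::nat) else 0) = 1" using V_gg(1)[OF a n] by simp
    show "1 = (\<Sum>i\<le>n. if gg a = 1 + i then 1 else (0::nat))" using e e1 by metis
  qed
  also have "\<dots> = (\<Sum>i\<le>n. Snum n (1 + i))" unfolding Snum_def by (rule sum.swap)
  finally show ?thesis .
qed

lemma I_card: "I n = card (V n)"
  unfolding I_def V_def valid_def using avoid_good by (metis (no_types, lifting))

lemma I_0: "I 0 = 1"
proof -
  have "V 0 = {[]}" by (auto simp: V_def valid_def inv_seq_def good_def)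
  then show ?thesis by (simp add: I_card)
qed

definition ordge :: "nat \<Rightarrow> real fps \<Rightarrow> bool" where
  "ordge m F \<longleftrightarrow> (\<forall>j<m. F $ j = 0)"

lemma ordge_mult: "ordge m A \<Longrightarrow> ordge n B \<Longrightarrow> ordge (m + n) (A * B)"
  unfolding ordge_def fps_mult_nth
proof (intro allI impI sum.neutral ballI)
  fix j i assume a: "\<forall>j<m. A $ j = 0" and b: "\<forall>j<n. B $ j = 0" and j: "j < m + n" and i: "i \<in> {0..j}"
  show "A $ i * B $ (j - i) = 0"
  proof (cases "i < m")
    case True then show ?thesis using a by simp
  next
    case False then have "j - i < n" using j i by auto
    then show ?thesis using b by simp
  qed
qed

lemma ordge_mono: "ordge m A \<Longrightarrow> n \<le> m \<Longrightarrow> ordge n A"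
  unfolding ordge_def by auto

lemma ordge_0: "ordge 0 A" by (simp add: ordge_def)

lemma ordge_power: "ordge 1 F \<Longrightarrow> ordge m (F ^ m)"
proof (induction m)
  case 0 then show ?case by (simp add: ordge_0)
next
  case (Suc m) then show ?case using ordge_mult[of 1 F m "F^m"] by simp
qed

lemma ordge_X: "ordge 1 (fps_X * A)" by (simp add: ordge_def)

lemma ordge_nth: "ordge m A \<Longrightarrow> n < m \<Longrightarrow> A $ n = 0"
  by (simp add: ordge_def)

lemma trunc1:
  fixes F A :: "real fps"
  assumes F0: "F $ 0 = 0"
  shows "(A * inverse (1 - F)) $ n = (\<Sum>i\<le>n. (A * F ^ i) $ n)"
proof -
  have u: "(1 - F) * inverse (1 - F) = 1" by (rule Formal_Power_Series.inverse_mult_eq_1') (simp add: F0)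
  have g: "(1 - F) * (\<Sum>i\<le>n. F ^ i) = 1 - F ^ Suc n"
    using sum_gp_multiplied[of 0 n F] by (simp add: atLeast0AtMost)
  have "A * inverse (1 - F) = A * (\<Sum>i\<le>n. F ^ i) + A * F ^ Suc n * inverse (1 - F)"
  proof -
    have "A * inverse (1 - F) = A * ((1 - F) * (\<Sum>i\<le>n. F ^ i) + F ^ Suc n) * inverse (1 - F)"
      using g u by (simp add: mult.assoc)
    also have "\<dots> = A * (\<Sum>i\<le>n. F ^ i) * ((1 - F) * inverse (1 - F)) + A * F ^ Suc n * inverse (1 - F)"
      by (simp add: algebra_simps)
    finally show ?thesis using u by simp
  qed
  moreover have "(A * F ^ Suc n * inverse (1 - F)) $ n = 0"
  proof -
    have "ordge (Suc n) (F ^ Suc n)" using F0 by (intro ordge_power) (simp add: ordge_def)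
    then have "ordge (Suc n) (F ^ Suc n * (A * inverse (1 - F)))"
      using ordge_mult[of "Suc n" _ 0] ordge_0 by fastforce
    then show ?thesis by (simp add: ordge_def mult.commute mult.left_commute)
  qed
  ultimately show ?thesis by (simp add: sum_distrib_left fps_sum_nth)
qed

lemma trunc2:
  fixes F A :: "real fps"
  assumes F0: "F $ 0 = 0"
  shows "(A * F * inverse (1 - F) ^ 2) $ n = (\<Sum>i\<le>n. of_nat i * (A * F ^ i) $ n)"
proof -
  have u: "(1 - F) * inverse (1 - F) = 1" by (rule Formal_Power_Series.inverse_mult_eq_1') (simp add: F0)
  have u2: "(1 - F)^2 * inverse (1 - F)^2 = 1" using u by (metis power_mult_distrib power_one)
  have g: "(1 - F)^2 * (\<Sum>i\<le>n. of_nat i * F ^ i) = F - of_nat (Suc n) * F ^ Suc n + of_nat n * F ^ Suc (Suc n)"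
  proof (induction n)
    case 0 then show ?case by simp
  next
    case (Suc n)
    have "(1 - F)^2 * (\<Sum>i\<le>Suc n. of_nat i * F ^ i) = (1 - F)^2 * (\<Sum>i\<le>n. of_nat i * F ^ i) + (1 - F)^2 * (of_nat (Suc n) * F ^ Suc n)"
      by (simp add: algebra_simps)
    also have "\<dots> = F - of_nat (Suc n) * F ^ Suc n + of_nat n * F ^ Suc (Suc n) + (1 - F)^2 * (of_nat (Suc n) * F ^ Suc n)"
      using Suc.IH by simp
    also have "\<dots> = F - of_nat (Suc (Suc n)) * F ^ Suc (Suc n) + of_nat (Suc n) * F ^ Suc (Suc (Suc n))"
      by (simp add: algebra_simps power2_eq_square)
    finally show ?case .
  qed
  define R where "R = of_nat (Suc n) * F ^ Suc n - of_nat n * F ^ Suc (Suc n)"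
  have FR: "F = (1 - F)^2 * (\<Sum>i\<le>n. of_nat i * F ^ i) + R" using g by (simp add: R_def algebra_simps)
  have "A * F * inverse (1 - F) ^ 2 = A * (\<Sum>i\<le>n. of_nat i * F ^ i) * ((1 - F)^2 * inverse (1 - F)^2) + A * R * inverse (1 - F) ^ 2"
    by (subst FR) (simp add: algebra_simps)
  then have e: "A * F * inverse (1 - F) ^ 2 = A * (\<Sum>i\<le>n. of_nat i * F ^ i) + A * R * inverse (1 - F) ^ 2"
    using u2 by simp
  have "ordge (Suc n) R"
  proof -
    have p: "ordge (Suc n) (F ^ Suc n)" using F0 by (intro ordge_power) (simp add: ordge_def)
    have "R = F ^ Suc n * (of_nat (Suc n) - of_nat n * F)" by (simp add: R_def algebra_simps)
    then show ?thesis using ordge_mult[OF p ordge_0] by simp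
  qed
  then have "ordge (Suc n) (R * (A * inverse (1 - F) ^ 2))"
    using ordge_mult[of "Suc n" R 0] ordge_0 by fastforce
  then have z: "(R * (A * inverse (1 - F) ^ 2)) $ n = 0" by (simp add: ordge_def)
  have eq: "A * R * inverse (1 - F) ^ 2 = R * (A * inverse (1 - F) ^ 2)" by (simp add: algebra_simps)
  have "(A * R * inverse (1 - F) ^ 2) $ n = 0" unfolding eq by (rule z)
  moreover have "(A * (\<Sum>i\<le>n. of_nat i * F ^ i)) $ n = (\<Sum>i\<le>n. of_nat i * (A * F ^ i) $ n)"
  proof -
    have h: "\<And>k. A * (of_nat k * F ^ k) = fps_const (real k) * (A * F ^ k)"
      by (simp add: fps_of_nat[symmetric] algebra_simps)
    show ?thesis by (simp only: sum_distrib_left fps_sum_nth h fps_mult_left_const_nth)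
  qed
  ultimately show ?thesis using e by simp
qed

locale sol =
  fixes X :: "real fps"
  assumes cubic: "1 - X - fps_X * X + 2 * fps_X * X^2 + fps_X^2 * X - fps_X^2 * X^3 = 0"
begin

definition "Y = fps_X * X"
definition "Bi = inverse (1 - Y)"
definition "Di = inverse (1 - Y - fps_X)"
definition "K = fps_X * (1 - Y) * Di"
definition "Sf k = K * Y ^ (k - 1)"
definition "Tf k = fps_X * (Sf k * Y * Bi ^ 2)"

lemma X0: "X $ 0 = 1"
proof -
  have "(1 - X - fps_X * X + 2 * fps_X * X^2 + fps_X^2 * X - fps_X^2 * X^3) $ 0 = 0" using cubic by simp
  then show ?thesis by (simp add: power2_eq_square)
qed

lemma Y0: "Y $ 0 = 0" by (simp add: Y_def)

lemma BB: "(1 - Y) * Bi = 1"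
  unfolding Bi_def by (rule Formal_Power_Series.inverse_mult_eq_1') (simp add: Y0)

lemma DD: "(1 - Y - fps_X) * Di = 1"
  unfolding Di_def by (rule Formal_Power_Series.inverse_mult_eq_1') (simp add: Y0)

lemma Yeq: "Y * (1 - Y)^2 = fps_X * (1 - Y)^2 + fps_X^2 * Y + fps_X * Y * (1 - Y)"
  using cubic unfolding Y_def by algebra

lemma E1: "K = fps_X + fps_X * (K * Bi)"
  using BB DD unfolding K_def by algebra

lemma E2: "Y = fps_X * (1 + fps_X * Y * Bi^2 + Y * Bi)"
  using BB Yeq by algebra

lemma E3: "K * Bi = fps_X * Di"
  using BB unfolding K_def by algebra

lemma E4: "(1 + fps_X * Di) * (fps_X * X) = (X - 1) * (1 - fps_X * X + fps_X^2 * X)"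
  using cubic DD unfolding Y_def by algebra

lemma ordK: "ordge 1 K" unfolding K_def by (simp add: ordge_def mult.assoc)
lemma ordY: "ordge 1 Y" unfolding Y_def by (simp add: ordge_def)

lemma ordSf: "k \<ge> 1 \<Longrightarrow> ordge k (Sf k)"
  unfolding Sf_def using ordge_mult[OF ordK ordge_power[OF ordY, of "k - 1"]] by simp

lemma K1: "K $ 1 = 1"
proof -
  have "K = fps_X * ((1 - Y) * Di)" unfolding K_def by (simp add: mult.assoc)
  then have "K $ 1 = ((1 - Y) * Di) $ 0" by simp
  also have "\<dots> = 1" by (simp add: Di_def Y0)
  finally show ?thesis .
qed

lemma Sf_shift: "k \<ge> 1 \<Longrightarrow> Sf k * Y ^ i = Sf (k + i)"
  unfolding Sf_def by (simp add: power_add[symmetric] mult.assoc)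

lemma Sf_Suc: "k \<ge> 1 \<Longrightarrow> Sf (Suc k) = Sf k * Y"
  unfolding Sf_def by (cases k) (auto simp: mult.assoc mult.commute)

lemma E2k:
  assumes "k \<ge> 2"
  shows "Sf k = fps_X * (Sf (k - 1) + fps_X * (Sf (k - 1) * Y * Bi^2) + Sf k * Bi)"
proof -
  have s: "Sf k = Sf (k - 1) * Y" using Sf_Suc[of "k - 1"] assms by simp
  show ?thesis unfolding s using E2 by algebra
qed

lemma sum_Sf: "k \<ge> 1 \<Longrightarrow> (\<Sum>i\<le>n. Sf (k + i) $ n) = (Sf k * Bi) $ n"
  unfolding Bi_def by (subst trunc1[OF Y0]) (simp add: Sf_shift)

lemma sum_Sf2: "k \<ge> 1 \<Longrightarrow> (\<Sum>i\<le>n. real i * Sf (k + i) $ n) = (Sf k * Y * Bi^2) $ n"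
  unfolding Bi_def by (subst trunc2[OF Y0]) (simp add: Sf_shift)

lemma main_ind:
  assumes "n \<ge> 1"
  shows "\<forall>k\<ge>1. real (Snum n k) = Sf k $ n \<and> real (Tnum n k) = Tf k $ n"
  using assms
proof (induction n rule: dec_induct)
  case base
  show ?case
  proof (intro allI impI conjI)
    fix k :: nat assume k: "k \<ge> 1"
    show "real (Snum 1 k) = Sf k $ 1"
    proof (cases "k = 1")
      case True then show ?thesis using K1 Snum_1[of 1] by (simp add: Sf_def)
    next
      case False then have "k \<ge> 2" using k by simp
      then have "Sf k $ 1 = 0" using ordSf[of k] by (simp add: ordge_def)
      then show ?thesis using False Snum_1[of k] by simp
    qed
    show "real (Tnum 1 k) = Tf k $ 1"
    proof -
      have "ordge 1 (Sf k * Y * Bi ^ 2)"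
        using ordge_mult[OF ordge_mult[OF ordSf[OF k] ordY] ordge_0[of "Bi^2"]] ordge_mono k by fastforce
      then show ?thesis using Tnum_1[of k] by (simp add: Tf_def ordge_def)
    qed
  qed
next
  case (step n)
  have n: "n \<ge> 1" using step.hyps by simp
  show ?case
  proof (intro allI impI conjI)
    fix k :: nat assume k: "k \<ge> 1"
    have "(\<Sum>i\<le>n. real (Snum n (k + i))) = (\<Sum>i\<le>n. Sf (k + i) $ n)"
      using step.IH k by (intro sum.cong) auto
    then have sum1: "real (\<Sum>i\<le>n. Snum n (k + i)) = (Sf k * Bi) $ n"
      using sum_Sf[OF k, of n] by simp
    have prev: "real (Snum n (k - 1) + Tnum n (k - 1)) = (if k \<ge> 2 then Sf (k - 1) $ n + Tf (k - 1) $ n else 0)"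
    proof (cases "k \<ge> 2")
      case True then show ?thesis using step.IH by simp
    next
      case False then have "k - 1 = 0" using k by simp
      then show ?thesis using False Snum_0[OF n] Tnum_0[OF n] by simp
    qed
    have "real (Snum (Suc n) k) = real (Snum n (k - 1) + Tnum n (k - 1)) + real (\<Sum>i\<le>n. Snum n (k + i))"
      using Snum_Suc[OF n k] by simp
    also have "\<dots> = Sf k $ Suc n"
    proof (cases "k \<ge> 2")
      case True
      have "Sf k $ Suc n = (Sf (k - 1) + fps_X * (Sf (k - 1) * Y * Bi^2) + Sf k * Bi) $ n"
        by (subst E2k[OF True]) simp
      also have "\<dots> = Sf (k - 1) $ n + Tf (k - 1) $ n + (Sf k * Bi) $ n" by (simp add: Tf_def)
      finally show ?thesis using prev sum1 True by simp
    next
      case False then have k1: "k = 1" using k by simp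
      have "K $ Suc n = (fps_X + fps_X * (K * Bi)) $ Suc n"
        using E1 by (rule arg_cong[where f="\<lambda>F. F $ Suc n"])
      then have "Sf 1 $ Suc n = (K * Bi) $ n" using n by (simp add: Sf_def)
      then show ?thesis using prev sum1 k1 by (simp add: Sf_def)
    qed
    finally show "real (Snum (Suc n) k) = Sf k $ Suc n" .
    have "real (Tnum (Suc n) k) = (\<Sum>i\<le>n. real i * real (Snum n (k + i)))"
      using Tnum_Suc[OF n k] by simp
    also have "\<dots> = (\<Sum>i\<le>n. real i * Sf (k + i) $ n)" using step.IH k by (intro sum.cong) auto
    also have "\<dots> = Tf k $ Suc n" using sum_Sf2[OF k] by (simp add: Tf_def)
    finally show "real (Tnum (Suc n) k) = Tf k $ Suc n" .
  qed
qed

lemma I_fps: "Abs_fps (\<lambda>n. real (I n)) = 1 + fps_X * Di"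
proof (rule fps_ext)
  fix n
  show "Abs_fps (\<lambda>n. real (I n)) $ n = (1 + fps_X * Di) $ n"
  proof (cases "n = 0")
    case True then show ?thesis by (simp add: I_0)
  next
    case False then have n: "n \<ge> 1" by simp
    have "real (I n) = real (\<Sum>i\<le>n. Snum n (1 + i))" by (simp add: I_card card_V[OF n])
    also have "\<dots> = (\<Sum>i\<le>n. Sf (1 + i) $ n)" unfolding of_nat_sum using main_ind[OF n] by (intro sum.cong) auto
    also have "\<dots> = (K * Bi) $ n" using sum_Sf[of 1 n] by (simp add: Sf_def)
    also have "\<dots> = (1 + fps_X * Di) $ n" using False by (simp add: E3)
    finally show ?thesis by simp
  qed
qed

lemma final: "Abs_fps (\<lambda>n. real (I n)) = (X - 1) * (1 - fps_X * X + fps_X^2 * X) / (fps_X * X)"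
proof -
  have nz: "fps_X * X \<noteq> 0"
  proof
    assume "fps_X * X = 0"
    then have "(fps_X * X) $ 1 = 0" by simp
    then show False using X0 by simp
  qed
  have "(X - 1) * (1 - fps_X * X + fps_X^2 * X) / (fps_X * X) = (1 + fps_X * Di) * (fps_X * X) / (fps_X * X)"
    by (simp add: E4)
  also have "\<dots> = 1 + fps_X * Di" by (rule fps_divide_times_eq[OF nz])
  finally show ?thesis using I_fps by simp
qed

end

definition Phi :: "real fps \<Rightarrow> real fps" where
  "Phi A = 1 - fps_X * A + 2 * fps_X * A^2 + fps_X^2 * A - fps_X^2 * A^3"
definition Psi :: "real fps \<Rightarrow> real fps" where
  "Psi A = - A + 2 * A^2 + fps_X * A - fps_X * A^3"

lemma Phi_Psi: "Phi A = 1 + fps_X * Psi A"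
  unfolding Phi_def Psi_def by (simp add: algebra_simps power2_eq_square)

lemma cubic_iff: "(1 - A - fps_X * A + 2 * fps_X * A^2 + fps_X^2 * A - fps_X^2 * A^3 = 0) \<longleftrightarrow> A = Phi A"
proof -
  have e: "1 - A - fps_X * A + 2 * fps_X * A^2 + fps_X^2 * A - fps_X^2 * A^3 = Phi A - A"
    unfolding Phi_def by (simp add: algebra_simps)
  show ?thesis unfolding e by auto
qed

definition agree :: "nat \<Rightarrow> real fps \<Rightarrow> real fps \<Rightarrow> bool" where
  "agree m A B \<longleftrightarrow> (\<forall>j\<le>m. A $ j = B $ j)"

lemma agree_refl: "agree m A A" by (simp add: agree_def)

lemma agree_add: "agree m A B \<Longrightarrow> agree m C D \<Longrightarrow> agree m (A + C) (B + D)"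
  by (simp add: agree_def)

lemma agree_diff: "agree m A B \<Longrightarrow> agree m C D \<Longrightarrow> agree m (A - C) (B - D)"
  by (simp add: agree_def)

lemma agree_uminus: "agree m A B \<Longrightarrow> agree m (- A) (- B)"
  by (simp add: agree_def)

lemma agree_mult: "agree m A B \<Longrightarrow> agree m C D \<Longrightarrow> agree m (A * C) (B * D)"
  unfolding agree_def fps_mult_nth by (auto intro!: sum.cong)

lemma agree_power: "agree m A B \<Longrightarrow> agree m (A ^ k) (B ^ k)"
  by (induction k) (simp_all add: agree_refl agree_mult)

lemma agree_Psi: "agree m A B \<Longrightarrow> agree m (Psi A) (Psi B)"
  unfolding Psi_def
  by (intro agree_add agree_diff agree_uminus agree_mult agree_power agree_refl) auto

lemma Phi_0: "Phi A $ 0 = 1" by (simp add: Phi_Psi)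

lemma agree_Phi: "agree m A B \<Longrightarrow> agree (Suc m) (Phi A) (Phi B)"
proof -
  assume a: "agree m A B"
  have p: "agree m (Psi A) (Psi B)" by (rule agree_Psi[OF a])
  show ?thesis unfolding agree_def
  proof (intro allI impI)
    fix j assume j: "j \<le> Suc m"
    show "Phi A $ j = Phi B $ j"
    proof (cases j)
      case 0 then show ?thesis by (simp add: Phi_0)
    next
      case (Suc i) then have "i \<le> m" using j by simp
      then show ?thesis using p Suc by (simp add: Phi_Psi agree_def)
    qed
  qed
qed

lemma fix_unique: "A = Phi A \<Longrightarrow> B = Phi B \<Longrightarrow> A = B"
proof -
  assume a: "A = Phi A" and b: "B = Phi B"
  have "agree n A B" for n
  proof (induction n)
    case 0 show ?case unfolding agree_def using a b Phi_0 by (metis le_zero_eq)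
  next
    case (Suc n) then show ?case using agree_Phi a b by metis
  qed
  then show "A = B" by (intro fps_ext) (auto simp: agree_def)
qed

primrec Xs :: "nat \<Rightarrow> real fps" where
  "Xs 0 = 1"
| "Xs (Suc n) = Phi (Xs n)"

lemma agree_Xs_Suc: "agree n (Xs n) (Xs (Suc n))"
proof (induction n)
  case 0 show ?case by (simp add: agree_def Phi_0)
next
  case (Suc n) then show ?case using agree_Phi by simp
qed

lemma agree_Xs: "agree n (Xs n) (Xs (n + d))"
proof (induction d)
  case 0 show ?case by (simp add: agree_refl)
next
  case (Suc d)
  have "agree (n + d) (Xs (n + d)) (Xs (Suc (n + d)))" by (rule agree_Xs_Suc)
  then have "agree n (Xs (n + d)) (Xs (Suc (n + d)))" by (simp add: agree_def)
  then show ?case using Suc by (simp add: agree_def)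
qed

definition Xl :: "real fps" where "Xl = Abs_fps (\<lambda>n. Xs n $ n)"

lemma agree_Xl: "agree m Xl (Xs m)"
  unfolding agree_def Xl_def
proof (intro allI impI)
  fix j assume j: "j \<le> m"
  have "agree j (Xs j) (Xs (j + (m - j)))" by (rule agree_Xs)
  then have "Xs j $ j = Xs m $ j" using j by (simp add: agree_def)
  then show "Abs_fps (\<lambda>n. Xs n $ n) $ j = Xs m $ j" by simp
qed

lemma Xl_fix: "Xl = Phi Xl"
proof (rule fps_ext)
  fix n show "Xl $ n = Phi Xl $ n"
  proof (cases n)
    case 0 then show ?thesis by (simp add: Phi_0 Xl_def)
  next
    case (Suc m)
    have "agree (Suc m) (Phi Xl) (Phi (Xs m))" by (rule agree_Phi[OF agree_Xl])
    then have "Phi Xl $ Suc m = Xs (Suc m) $ Suc m" by (simp add: agree_def)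
    then show ?thesis using Suc by (simp add: Xl_def)
  qed
qed

lemma ex_unique: "\<exists>!X :: real fps. 1 - X - fps_X * X + 2 * fps_X * X^2 + fps_X^2 * X - fps_X^2 * X^3 = 0"
  unfolding cubic_iff using Xl_fix fix_unique by blast

definition get :: "nat list \<Rightarrow> nat \<Rightarrow> nat" where
  "get l j = (if j < length l then l ! j else 0)"

definition nxt :: "nat \<Rightarrow> nat list \<times> nat list \<Rightarrow> nat list \<times> nat list" where
  "nxt n p = (map (\<lambda>k. if k = 0 then 0 else get (fst p) (k - 1) + get (snd p) (k - 1) + sum_list (map (\<lambda>i. get (fst p) (k + i)) [0..<Suc n])) [0..<n + 2],
              map (\<lambda>k. if k = 0 then 0 else sum_list (map (\<lambda>i. i * get (fst p) (k + i)) [0..<Suc n])) [0..<n + 2])"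

fun rows :: "nat \<Rightarrow> nat list \<times> nat list" where
  "rows 0 = ([], [])"
| "rows (Suc 0) = ([0, 1], [0, 0])"
| "rows (Suc (Suc n)) = nxt (Suc n) (rows (Suc n))"

lemma rows_Suc: "n \<ge> 1 \<Longrightarrow> rows (Suc n) = nxt n (rows n)"
  by (cases n) auto

lemma Snum_big: "n \<ge> 1 \<Longrightarrow> n < k \<Longrightarrow> Snum n k = 0"
  unfolding Snum_def using V_gg(2) by (intro sum.neutral) fastforce

lemma Tnum_big: "n \<ge> 1 \<Longrightarrow> n < k \<Longrightarrow> Tnum n k = 0"
  unfolding Tnum_def using V_gg(2) by (intro sum.neutral) fastforce

lemma sum_list_upt: "sum_list (map (f :: nat \<Rightarrow> nat) [0..<Suc n]) = (\<Sum>i\<le>n. f i)"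
  by (induction n) (simp_all add: add.assoc[symmetric])

lemma get_map: "get (map f [0..<m]) k = (if k < m then f k else 0)"
  by (simp add: get_def)

lemma rows_correct:
  assumes "n \<ge> 1"
  shows "\<forall>k. get (fst (rows n)) k = Snum n k \<and> get (snd (rows n)) k = Tnum n k"
  using assms
proof (induction n rule: dec_induct)
  case base
  show ?case
  proof
    fix k
    show "get (fst (rows 1)) k = Snum 1 k \<and> get (snd (rows 1)) k = Tnum 1 k"
      using Snum_1[of k] Tnum_1[of k]
      by (cases k) (auto simp: get_def nth_Cons split: nat.splits)
  qed
next
  case (step n)
  have n: "n \<ge> 1" using step.hyps by simp
  show ?case
  proof
    fix k
    show "get (fst (rows (Suc n))) k = Snum (Suc n) k \<and> get (snd (rows (Suc n))) k = Tnum (Suc n) k"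
    proof (cases "k < n + 2")
      case False
      then show ?thesis using Snum_big[of "Suc n" k] Tnum_big[of "Suc n" k]
        by (simp only: rows_Suc[OF n] nxt_def fst_conv snd_conv get_map) simp
    next
      case True
      show ?thesis
      proof (cases "k = 0")
        case True then show ?thesis using Snum_0[of "Suc n"] Tnum_0[of "Suc n"]
          by (simp only: rows_Suc[OF n] nxt_def fst_conv snd_conv get_map) simp
      next
        case False
        then have k: "k \<ge> 1" by simp
        show ?thesis using \<open>k < n + 2\<close> False step.IH Snum_Suc[OF n k] Tnum_Suc[OF n k]
          by (simp only: rows_Suc[OF n] nxt_def fst_conv snd_conv get_map sum_list_upt) simp
      qed
    qed
  qed
qed

lemma I_rows: "n \<ge> 1 \<Longrightarrow> I n = sum_list (map (\<lambda>i. get (fst (rows n)) (1 + i)) [0..<Suc n])"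
proof -
  assume n: "n \<ge> 1"
  have "sum_list (map (\<lambda>i. get (fst (rows n)) (1 + i)) [0..<Suc n]) = (\<Sum>i\<le>n. get (fst (rows n)) (1 + i))"
    by (rule sum_list_upt)
  also have "\<dots> = (\<Sum>i\<le>n. Snum n (1 + i))" using rows_correct[OF n] by simp
  finally show ?thesis using I_card card_V[OF n] by simp
qed

lemma I_values: "map I [0..<8] = [1, 1, 2, 5, 15, 50, 178, 663]"
proof -
  have "map I [0..<8] = map I [0,1,2,3,4,5,6,7]" by (simp add: upt_rec eval_nat_numeral)
  also have "\<dots> = [1, 1, 2, 5, 15, 50, 178, 663]"
    by (simp add: I_0 I_rows del: rows.simps; code_simp)
  finally show ?thesis .
qed

theorem mainTheorem6:
  shows "(\<exists>!X :: real fps. 1 - X - fps_X * X + 2 * fps_X * X^2 + fps_X^2 * X - fps_X^2 * X^3 = 0)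
    \<and> (\<forall>X :: real fps. 1 - X - fps_X * X + 2 * fps_X * X^2 + fps_X^2 * X - fps_X^2 * X^3 = 0 \<longrightarrow>
          Abs_fps (\<lambda>n. real (I n)) = (X - 1) * (1 - fps_X * X + fps_X^2 * X) / (fps_X * X))
    \<and> map I [0..<8] = [1, 1, 2, 5, 15, 50, 178, 663]"
proof (intro conjI)
  show "\<exists>!X :: real fps. 1 - X - fps_X * X + 2 * fps_X * X^2 + fps_X^2 * X - fps_X^2 * X^3 = 0"
    by (rule ex_unique)
  show "\<forall>X :: real fps. 1 - X - fps_X * X + 2 * fps_X * X^2 + fps_X^2 * X - fps_X^2 * X^3 = 0 \<longrightarrow>
          Abs_fps (\<lambda>n. real (I n)) = (X - 1) * (1 - fps_X * X + fps_X^2 * X) / (fps_X * X)"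
  proof (intro allI impI)
    fix X :: "real fps"
    assume h: "1 - X - fps_X * X + 2 * fps_X * X^2 + fps_X^2 * X - fps_X^2 * X^3 = 0"
    then have "sol X" by (simp add: sol_def)
    then show "Abs_fps (\<lambda>n. real (I n)) = (X - 1) * (1 - fps_X * X + fps_X^2 * X) / (fps_X * X)"
      by (rule sol.final)
  qed
  show "map I [0..<8] = [1, 1, 2, 5, 15, 50, 178, 663]" by (rule I_values)
qed

end
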